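(* Let $G=(V,E)$ be a directed graph on $n$ nodes in which every node has a self-loop, let $P$ be an $n\times n$ right stochastic matrix supported on the edges of $G$, let $D$ be diagonal with entries $D_{uu}=p_{uu'}\in[0,1]$, and let $\tilde P=(\mathbf I_n-D)P$. Write $p^{(t)}_{uv}=(P^t)_{uv}$ and $\tilde p^{(t)}_{uv}=(\tilde P^t)_{uv}$. Then for all $u,v\in V$ and every integer $t\ge 1$, $$(1-p_{uu'})\Big(\max_{w\in V}(1-p_{ww'})\Big)^{t-1}p^{(t)}_{uv}\;\ge\;\tilde p^{(t)}_{uv}\;\ge\;(1-p_{uu'})\Big(\min_{w\in V}(1-p_{ww'})\Big)^{t-1}p^{(t)}_{uv}.$$
   Context: $p_{uu'}$ is interpreted as the probability that a random walker at $u$ is absorbed (moves to an auxiliary absorbing node $u'$); $\tilde p^{(t)}_{uv}$ is the probability that a walker started at $u$ is at $v$ (not yet absorbed) after $t$ steps. *)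

theory Defs
  imports "HOL-Analysis.Analysis"
begin

definition right_stochastic :: "real^'n^'n \<Rightarrow> bool" where
  "right_stochastic P \<longleftrightarrow> (\<forall>i j. P $ i $ j \<ge> 0) \<and> (\<forall>i. (\<Sum>j\<in>UNIV. P $ i $ j) = 1)"

fun mat_pow :: "real^'n^'n \<Rightarrow> nat \<Rightarrow> real^'n^'n" where
  "mat_pow A 0 = mat 1"
| "mat_pow A (Suc k) = mat_pow A k ** A"

end

theory Submission
  imports Defs
begin

lemma mat_pow_nonneg:
  fixes P :: "real^'n::finite^'n"
  assumes "\<forall>i j. P $ i $ j \<ge> 0"
  shows "mat_pow P k $ i $ j \<ge> 0"
proof (induction k arbitrary: j)
  case 0 then show ?case by (simp add: mat_def)
next
  case (Suc k) then show ?case using assms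
    by (simp add: matrix_matrix_mult_def sum_nonneg)
qed

theorem lemma2:
  fixes E :: "('n::finite \<times> 'n) set"
    and P :: "real^'n^'n"
    and a :: "'n \<Rightarrow> real"
  assumes self_loops: "\<forall>w. (w, w) \<in> E"
    and stoch: "right_stochastic P"
    and support: "\<forall>i j. P $ i $ j \<noteq> 0 \<longrightarrow> (i, j) \<in> E"
    and a_range: "\<forall>w. 0 \<le> a w \<and> a w \<le> 1"
    and t_ge: "t \<ge> 1"
  defines "Pt \<equiv> (mat 1 - (\<chi> i j. if i = j then a i else 0) :: real^'n^'n) ** P"
  shows "(1 - a u) * (Max (range (\<lambda>w. 1 - a w))) ^ (t - 1) * mat_pow P t $ u $ v
           \<ge> mat_pow Pt t $ u $ v
       \<and> mat_pow Pt t $ u $ v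
           \<ge> (1 - a u) * (Min (range (\<lambda>w. 1 - a w))) ^ (t - 1) * mat_pow P t $ u $ v"
proof -
  define c where "c = (\<lambda>w. 1 - a w)"
  define M where "M = Max (range c)"
  define m where "m = Min (range c)"
  have c0: "\<And>w. 0 \<le> c w" using a_range by (simp add: c_def)
  have cM: "\<And>w. c w \<le> M" unfolding M_def by (rule Max_ge) auto
  have cm: "\<And>w. m \<le> c w" unfolding m_def by (rule Min_le) auto
  have m0: "0 \<le> m" unfolding m_def using c0 by (subst Min_ge_iff) auto
  have M0: "0 \<le> M" using c0[of u] cM[of u] by linarith
  have Pn: "\<forall>i j. P $ i $ j \<ge> 0" using stoch by (simp add: right_stochastic_def)
  have Ptij: "\<And>i j. Pt $ i $ j = c i * P $ i $ j"
  proof -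
    fix i j
    have "Pt $ i $ j = (\<Sum>k\<in>UNIV. (if i = k then c i * P $ k $ j else 0))"
      unfolding Pt_def matrix_matrix_mult_def c_def
      by (simp only: vec_lambda_beta, rule sum.cong) (auto simp: mat_def)
    also have "\<dots> = c i * P $ i $ j"
      by (simp add: sum.delta)
    finally show "Pt $ i $ j = c i * P $ i $ j" .
  qed
  have main: "\<And>v. c u * M ^ k * mat_pow P (Suc k) $ u $ v \<ge> mat_pow Pt (Suc k) $ u $ v
       \<and> mat_pow Pt (Suc k) $ u $ v \<ge> c u * m ^ k * mat_pow P (Suc k) $ u $ v" for k
  proof (induction k)
    case 0
    show ?case by (simp add: Ptij)
  next
    case (Suc k)
    fix v
    have up: "mat_pow Pt (Suc k) $ u $ w * Pt $ w $ v
        \<le> c u * M ^ Suc k * (mat_pow P (Suc k) $ u $ w * P $ w $ v)" for w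
    proof -
      have X0: "0 \<le> c u * M ^ k * mat_pow P (Suc k) $ u $ w"
        using c0[of u] M0 mat_pow_nonneg[OF Pn, of "Suc k" u w] by (intro mult_nonneg_nonneg) auto
      have "mat_pow Pt (Suc k) $ u $ w * Pt $ w $ v
           = (mat_pow Pt (Suc k) $ u $ w * c w) * P $ w $ v" by (simp add: Ptij)
      also have "\<dots> \<le> (c u * M ^ k * mat_pow P (Suc k) $ u $ w * M) * P $ w $ v"
        apply (rule mult_right_mono[OF _ Pn[rule_format]])
        apply (rule mult_mono[OF Suc.IH[THEN conjunct1] cM X0 c0])
        done
      finally show ?thesis by (simp add: algebra_simps)
    qed
    have lo: "mat_pow Pt (Suc k) $ u $ w * Pt $ w $ v
        \<ge> c u * m ^ Suc k * (mat_pow P (Suc k) $ u $ w * P $ w $ v)" for w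
    proof -
      have Y0: "0 \<le> c u * m ^ k * mat_pow P (Suc k) $ u $ w"
        using c0[of u] m0 mat_pow_nonneg[OF Pn, of "Suc k" u w] by (intro mult_nonneg_nonneg) auto
      have "mat_pow Pt (Suc k) $ u $ w * Pt $ w $ v
           = (mat_pow Pt (Suc k) $ u $ w * c w) * P $ w $ v" by (simp add: Ptij)
      also have "\<dots> \<ge> (c u * m ^ k * mat_pow P (Suc k) $ u $ w * m) * P $ w $ v"
        apply (rule mult_right_mono[OF _ Pn[rule_format]])
        apply (rule mult_mono[OF Suc.IH[THEN conjunct2] cm _ m0])
        using Y0 Suc.IH[THEN conjunct2, of w] apply linarith
        done
      finally show ?thesis by (simp add: algebra_simps)
    qed
    have e1: "mat_pow Pt (Suc (Suc k)) $ u $ v = (\<Sum>w\<in>UNIV. mat_pow Pt (Suc k) $ u $ w * Pt $ w $ v)"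
      by (simp add: matrix_matrix_mult_def)
    have e2: "c u * M ^ Suc k * mat_pow P (Suc (Suc k)) $ u $ v
       = (\<Sum>w\<in>UNIV. c u * M ^ Suc k * (mat_pow P (Suc k) $ u $ w * P $ w $ v))"
      by (simp add: matrix_matrix_mult_def sum_distrib_left)
    have e3: "c u * m ^ Suc k * mat_pow P (Suc (Suc k)) $ u $ v
       = (\<Sum>w\<in>UNIV. c u * m ^ Suc k * (mat_pow P (Suc k) $ u $ w * P $ w $ v))"
      by (simp add: matrix_matrix_mult_def sum_distrib_left)
    have s1: "(\<Sum>w\<in>UNIV. mat_pow Pt (Suc k) $ u $ w * Pt $ w $ v)
       \<le> (\<Sum>w\<in>UNIV. c u * M ^ Suc k * (mat_pow P (Suc k) $ u $ w * P $ w $ v))"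
      by (rule sum_mono) (rule up)
    have s2: "(\<Sum>w\<in>UNIV. mat_pow Pt (Suc k) $ u $ w * Pt $ w $ v)
       \<ge> (\<Sum>w\<in>UNIV. c u * m ^ Suc k * (mat_pow P (Suc k) $ u $ w * P $ w $ v))"
      by (rule sum_mono) (rule lo)
    show "c u * M ^ Suc k * mat_pow P (Suc (Suc k)) $ u $ v \<ge> mat_pow Pt (Suc (Suc k)) $ u $ v
       \<and> mat_pow Pt (Suc (Suc k)) $ u $ v \<ge> c u * m ^ Suc k * mat_pow P (Suc (Suc k)) $ u $ v"
      unfolding e1 e2 e3 using s1 s2 by simp
  qed
  obtain k where t: "t = Suc k" using t_ge by (cases t) auto
  show ?thesis using main[of k v] unfolding t c_def M_def m_def by simp
qed

end
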